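(* Assume the Axiom of Choice. Let $A$ be a $\boldsymbol{\mathit{ba}\ell}$-algebra, $X$ the set of proper archimedean $\ell$-ideals of $A$ ordered by inclusion with the Alexandroff topology, and $Y_A\subseteq X$ the set of maximal $\ell$-ideals of $A$. Then the restriction map $\psi:N(X)\to B(Y_A)$, $\psi(f)=f|_{Y_A}$, is a $\boldsymbol{\mathit{ba}\ell}$-isomorphism.
   Context: A $\boldsymbol{\mathit{ba}\ell}$-algebra is a commutative unital lattice-ordered algebra $A$ over $\mathbb R$ that is bounded (for every $a\in A$ there is an integer $n\ge1$ with $a\le n\cdot1$) and archimedean (if $na\le b$ for all $n\ge1$ then $a\le0$). An $\ell$-ideal is a ring ideal $I$ with $|a|\le|b|$, $b\in I\Rightarrow a\in I$; it is archimedean if $A/I$ is archimedean; every maximal $\ell$-ideal is archimedean. The Alexandroff topology on a poset has the upsets as open sets. For a space $X$, $B(X)$ is the $\boldsymbol{\mathit{ba}\ell}$-algebra of bounded real functions with pointwise operations, $f_*(x)=\sup\{\inf f[U]\mid U\text{ open}\ni x\}$, $f^*(x)=\inf\{\sup f[U]\mid U\text{ open}\ni x\}$, $f^\#=(f^* )_*$, and $N(X)=\{f\in B(X)\mid f=f^\#\}$, a Dedekind complete $\boldsymbol{\mathit{ba}\ell}$-algebra whose operations are the normalizations $(\cdot)^\#$ of pointwise operations. *)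

theory Defs
  imports "HOL-Analysis.Analysis"
begin

text \<open>A commutative unital real algebra carrying a lattice order that makes it an
 \<ell>-group, with positive cone closed under products and positive scalars
 (lattice-ordered algebra), which is bounded (1 is a strong order unit)
 and archimedean.\<close>


definition bal_algebra :: "'a::{comm_ring_1, real_algebra_1, ordered_ab_group_add, lattice} itself \<Rightarrow> bool" where
  "bal_algebra _ \<longleftrightarrow>
     (\<forall>a b :: 'a. 0 \<le> a \<longrightarrow> 0 \<le> b \<longrightarrow> 0 \<le> a * b) \<and>
     (\<forall>(r::real) (a::'a). 0 \<le> r \<longrightarrow> 0 \<le> a \<longrightarrow> 0 \<le> r *\<^sub>R a) \<and>
     (\<forall>a :: 'a. \<exists>n::nat. n \<ge> 1 \<and> a \<le> of_nat n) \<and>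
     (\<forall>a b :: 'a. (\<forall>n::nat. n \<ge> 1 \<longrightarrow> of_nat n * a \<le> b) \<longrightarrow> a \<le> 0)"

definition labs :: "'a::{ordered_ab_group_add, lattice} \<Rightarrow> 'a" where
  "labs a = sup a (- a)"

definition l_ideal :: "'a::{comm_ring_1, ordered_ab_group_add, lattice} set \<Rightarrow> bool" where
  "l_ideal I \<longleftrightarrow> 0 \<in> I \<and> (\<forall>a\<in>I. \<forall>b\<in>I. a + b \<in> I) \<and> (\<forall>a. \<forall>b\<in>I. a * b \<in> I)
     \<and> (\<forall>a b. b \<in> I \<and> labs a \<le> labs b \<longrightarrow> a \<in> I)"

text \<open>The order of the quotient A/I for an \<ell>-ideal I:
  [a] \<le> [b] iff the negative part (b - a)^- = (a - b) \<or> 0 lies in I.\<close>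
definition quot_le :: "'a::{comm_ring_1, ordered_ab_group_add, lattice} set \<Rightarrow> 'a \<Rightarrow> 'a \<Rightarrow> bool" where
  "quot_le I a b \<longleftrightarrow> sup (a - b) 0 \<in> I"

text \<open>I is archimedean iff A/I is archimedean.\<close>
definition archimedean_l_ideal :: "'a::{comm_ring_1, ordered_ab_group_add, lattice} set \<Rightarrow> bool" where
  "archimedean_l_ideal I \<longleftrightarrow> l_ideal I \<and>
     (\<forall>a b. (\<forall>n::nat. n \<ge> 1 \<longrightarrow> quot_le I (of_nat n * a) b) \<longrightarrow> quot_le I a 0)"

definition maximal_l_ideal :: "'a::{comm_ring_1, ordered_ab_group_add, lattice} set \<Rightarrow> bool" where
  "maximal_l_ideal I \<longleftrightarrow> l_ideal I \<and> I \<noteq> UNIV \<and>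
     (\<forall>J. l_ideal J \<and> J \<noteq> UNIV \<and> I \<subseteq> J \<longrightarrow> J = I)"

definition arch_spec :: "'a::{comm_ring_1, ordered_ab_group_add, lattice} itself \<Rightarrow> 'a set set" where
  "arch_spec _ = {I. l_ideal I \<and> I \<noteq> UNIV \<and> archimedean_l_ideal I}"

definition max_spec :: "'a::{comm_ring_1, ordered_ab_group_add, lattice} itself \<Rightarrow> 'a set set" where
  "max_spec _ = {I. maximal_l_ideal I}"

definition alexandroff_topology :: "'b set set \<Rightarrow> 'b set topology" where
  "alexandroff_topology X = topology (\<lambda>U. U \<subseteq> X \<and> (\<forall>u\<in>U. \<forall>v\<in>X. u \<subseteq> v \<longrightarrow> v \<in> U))"

definition Bset :: "'x set \<Rightarrow> ('x \<Rightarrow> real) set" where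
  "Bset S = {f. (\<exists>c. \<forall>x\<in>S. \<bar>f x\<bar> \<le> c) \<and> (\<forall>x. x \<notin> S \<longrightarrow> f x = 0)}"

definition Bfun :: "'x topology \<Rightarrow> ('x \<Rightarrow> real) set" where
  "Bfun T = Bset (topspace T)"

definition lower_fun :: "'x topology \<Rightarrow> ('x \<Rightarrow> real) \<Rightarrow> 'x \<Rightarrow> real" where
  "lower_fun T f x = Sup ((\<lambda>U. Inf (f ` U)) ` {U. openin T U \<and> x \<in> U})"

definition upper_fun :: "'x topology \<Rightarrow> ('x \<Rightarrow> real) \<Rightarrow> 'x \<Rightarrow> real" where
  "upper_fun T f x = Inf ((\<lambda>U. Sup (f ` U)) ` {U. openin T U \<and> x \<in> U})"

text \<open>f^# = (f^*)_*, extended by 0 outside the space.\<close>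
definition normalize :: "'x topology \<Rightarrow> ('x \<Rightarrow> real) \<Rightarrow> 'x \<Rightarrow> real" where
  "normalize T f = (\<lambda>x. if x \<in> topspace T then lower_fun T (upper_fun T f) x else 0)"

definition Nfun :: "'x topology \<Rightarrow> ('x \<Rightarrow> real) set" where
  "Nfun T = {f \<in> Bfun T. normalize T f = f}"

text \<open>A ba\<ell>-isomorphism psi : N(T) \<rightarrow> B(Y): a bijection preserving the unit and the
  ba\<ell>-operations of N(T) (normalizations of the pointwise operations)
  and the pointwise operations of B(Y).\<close>
definition bal_iso_N_B :: "'x topology \<Rightarrow> 'y set \<Rightarrow> (('x \<Rightarrow> real) \<Rightarrow> ('y \<Rightarrow> real)) \<Rightarrow> bool" where
  "bal_iso_N_B T Y \<psi> \<longleftrightarrow>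
     bij_betw \<psi> (Nfun T) (Bset Y) \<and>
     \<psi> (\<lambda>x. if x \<in> topspace T then 1 else 0) = (\<lambda>y. if y \<in> Y then 1 else 0) \<and>
     (\<forall>f\<in>Nfun T. \<forall>g\<in>Nfun T.
        \<psi> (normalize T (\<lambda>x. f x + g x)) = (\<lambda>y. \<psi> f y + \<psi> g y) \<and>
        \<psi> (normalize T (\<lambda>x. f x * g x)) = (\<lambda>y. \<psi> f y * \<psi> g y) \<and>
        \<psi> (normalize T (\<lambda>x. max (f x) (g x))) = (\<lambda>y. max (\<psi> f y) (\<psi> g y)) \<and>
        \<psi> (normalize T (\<lambda>x. min (f x) (g x))) = (\<lambda>y. min (\<psi> f y) (\<psi> g y))) \<and>
     (\<forall>f\<in>Nfun T. \<forall>r::real. \<psi> (normalize T (\<lambda>x. r * f x)) = (\<lambda>y. r * \<psi> f y))"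

definition restrict_to :: "'y set \<Rightarrow> ('y \<Rightarrow> real) \<Rightarrow> 'y \<Rightarrow> real" where
  "restrict_to Y f = (\<lambda>y. if y \<in> Y then f y else 0)"

end

theory Submission
  imports Defs
begin


definition up :: "'b set set \<Rightarrow> 'b set \<Rightarrow> 'b set set" where "up X x = {z\<in>X. x \<subseteq> z}"

lemma alex_istop: "istopology (\<lambda>U. U \<subseteq> X \<and> (\<forall>u\<in>U. \<forall>v\<in>X. u \<subseteq> v \<longrightarrow> v \<in> U))"
  unfolding istopology_def by blast

lemma alex_open: "openin (alexandroff_topology X) U \<longleftrightarrow> U \<subseteq> X \<and> (\<forall>u\<in>U. \<forall>v\<in>X. u \<subseteq> v \<longrightarrow> v \<in> U)"
  unfolding alexandroff_topology_def topology_inverse'[OF alex_istop] by simp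

lemma alex_top: "topspace (alexandroff_topology X) = X"
  unfolding topspace_def alex_open by blast

lemma up_open: "openin (alexandroff_topology X) (up X x)"
  unfolding alex_open up_def by blast

lemma up_sub: "openin (alexandroff_topology X) U \<Longrightarrow> x \<in> U \<Longrightarrow> up X x \<subseteq> U"
  unfolding alex_open up_def by blast

lemma up_self: "x \<in> X \<Longrightarrow> x \<in> up X x" unfolding up_def by blast

lemma upper_eq:
  assumes x: "x \<in> X" and bnd: "\<And>z. z \<in> X \<Longrightarrow> \<bar>h z\<bar> \<le> C"
  shows "upper_fun (alexandroff_topology X) h x = Sup (h ` up X x)"
  unfolding upper_fun_def
proof (rule cInf_eq_minimum)
  show "Sup (h ` up X x) \<in> (\<lambda>U. Sup (h ` U)) ` {U. openin (alexandroff_topology X) U \<and> x \<in> U}"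
    using up_open up_self[OF x] by blast
next
  fix s assume "s \<in> (\<lambda>U. Sup (h ` U)) ` {U. openin (alexandroff_topology X) U \<and> x \<in> U}"
  then obtain U where U: "openin (alexandroff_topology X) U" "x \<in> U" and s: "s = Sup (h ` U)" by blast
  have UX: "U \<subseteq> X" using U(1) alex_open by blast
  show "Sup (h ` up X x) \<le> s" unfolding s
  proof (rule cSup_subset_mono)
    show "h ` up X x \<noteq> {}" using up_self[OF x] by blast
    show "bdd_above (h ` U)" using bnd UX by (intro bdd_aboveI2[where M=C]) (force dest: abs_le_D1)
    show "h ` up X x \<subseteq> h ` U" using up_sub[OF U] by blast
  qed
qed

lemma lower_eq:
  assumes x: "x \<in> X" and bnd: "\<And>z. z \<in> X \<Longrightarrow> - C \<le> g z"
  shows "lower_fun (alexandroff_topology X) g x = Inf (g ` up X x)"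
  unfolding lower_fun_def
proof (rule cSup_eq_maximum)
  show "Inf (g ` up X x) \<in> (\<lambda>U. Inf (g ` U)) ` {U. openin (alexandroff_topology X) U \<and> x \<in> U}"
    using up_open up_self[OF x] by blast
next
  fix s assume "s \<in> (\<lambda>U. Inf (g ` U)) ` {U. openin (alexandroff_topology X) U \<and> x \<in> U}"
  then obtain U where U: "openin (alexandroff_topology X) U" "x \<in> U" and s: "s = Inf (g ` U)" by blast
  have UX: "U \<subseteq> X" using U(1) alex_open by blast
  show "s \<le> Inf (g ` up X x)" unfolding s
  proof (rule cInf_superset_mono)
    show "g ` up X x \<noteq> {}" using up_self[OF x] by blast
    show "bdd_below (g ` U)" using bnd UX by (intro bdd_belowI2[where m="-C"]) force
    show "g ` up X x \<subseteq> g ` U" using up_sub[OF U] by blast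
  qed
qed

lemma normalize_eq:
  assumes x: "x \<in> X" and bnd: "\<And>z. z \<in> X \<Longrightarrow> \<bar>h z\<bar> \<le> C"
  shows "normalize (alexandroff_topology X) h x = Inf ((\<lambda>y. Sup (h ` up X y)) ` up X x)"
proof -
  have lb: "- C \<le> upper_fun (alexandroff_topology X) h z" if z: "z \<in> X" for z
  proof -
    have "h z \<le> Sup (h ` up X z)"
      by (rule cSup_upper) (use up_self[OF z] bnd in \<open>auto simp: up_def intro!: bdd_aboveI2[where M=C] dest: abs_le_D1\<close>)
    moreover have "- C \<le> h z" using bnd[OF z] by linarith
    ultimately show ?thesis using upper_eq[where h=h and C=C, OF z bnd] by linarith
  qed
  have "normalize (alexandroff_topology X) h x = Inf (upper_fun (alexandroff_topology X) h ` up X x)"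
    unfolding normalize_def alex_top using x lower_eq[OF x lb] by simp
  also have "\<dots> = Inf ((\<lambda>y. Sup (h ` up X y)) ` up X x)"
    by (rule arg_cong[where f=Inf], rule image_cong, simp) (use upper_eq bnd in \<open>auto simp: up_def\<close>)
  finally show ?thesis .
qed

locale YX =
  fixes X Y :: "'b set set"
  assumes YX: "Y \<subseteq> X" and ex: "\<And>x. x\<in>X \<Longrightarrow> \<exists>m\<in>Y. x \<subseteq> m"
    and mx: "\<And>m z. m\<in>Y \<Longrightarrow> z\<in>X \<Longrightarrow> m \<subseteq> z \<Longrightarrow> z = m"
begin

lemma upY: "m \<in> Y \<Longrightarrow> up X m = {m}"
  using YX mx unfolding up_def by blast

lemma norm_E:
  assumes x: "x \<in> X" and bnd: "\<And>z. z \<in> X \<Longrightarrow> \<bar>h z\<bar> \<le> C"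
  shows "normalize (alexandroff_topology X) h x = Inf (h ` (Y \<inter> up X x))"
proof -
  let ?S = "(\<lambda>y. Sup (h ` up X y)) ` up X x"
  let ?R = "h ` (Y \<inter> up X x)"
  have Rne: "?R \<noteq> {}" using ex[OF x] YX unfolding up_def by blast
  have Rb: "bdd_below ?R" using bnd YX
    by (intro bdd_belowI2[where m="-C"]) (force simp: up_def abs_le_iff)
  have Sne: "?S \<noteq> {}" using up_self[OF x] by blast
  have Sb: "bdd_below ?S"
  proof (rule bdd_belowI2[where m="-C"])
    fix y assume y: "y \<in> up X x"
    hence yX: "y \<in> X" by (simp add: up_def)
    have "h y \<le> Sup (h ` up X y)"
      by (rule cSup_upper) (use up_self[OF yX] bnd in \<open>auto simp: up_def intro!: bdd_aboveI2[where M=C] dest: abs_le_D1\<close>)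
    thus "- C \<le> Sup (h ` up X y)" using bnd[OF yX] by linarith
  qed
  have "Inf ?R \<le> Inf ?S"
  proof (rule cInf_greatest[OF Sne])
    fix s assume "s \<in> ?S"
    then obtain y where y: "y \<in> up X x" and s: "s = Sup (h ` up X y)" by blast
    have yX: "y \<in> X" using y by (simp add: up_def)
    obtain m where m: "m \<in> Y" "y \<subseteq> m" using ex[OF yX] by blast
    have my: "m \<in> up X y" using m YX by (auto simp: up_def)
    have mx': "m \<in> Y \<inter> up X x" using m my y by (auto simp: up_def)
    have "Inf ?R \<le> h m" using mx' Rb by (intro cInf_lower) auto
    also have "h m \<le> Sup (h ` up X y)"
      by (rule cSup_upper) (use my bnd in \<open>auto simp: up_def intro!: bdd_aboveI2[where M=C] dest: abs_le_D1\<close>)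
    finally show "Inf ?R \<le> s" using s by simp
  qed
  moreover have "Inf ?S \<le> Inf ?R"
  proof (rule cInf_greatest[OF Rne])
    fix r assume "r \<in> ?R"
    then obtain m where m: "m \<in> Y" "m \<in> up X x" and r: "r = h m" by blast
    have "Sup (h ` up X m) = h m" using upY[OF m(1)] by simp
    hence "h m \<in> ?S" using m(2) by force
    thus "Inf ?S \<le> r" using Sb r by (intro cInf_lower) auto
  qed
  ultimately show ?thesis using normalize_eq[where h=h and C=C, OF x bnd] by simp
qed

lemma norm_Y:
  assumes m: "m \<in> Y" and bnd: "\<And>z. z \<in> X \<Longrightarrow> \<bar>h z\<bar> \<le> C"
  shows "normalize (alexandroff_topology X) h m = h m"
proof -
  have "Y \<inter> up X m = {m}" using upY[OF m] m by blast
  thus ?thesis using norm_E[where h=h and C=C, OF _ bnd, of m] m YX by auto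
qed


lemma bset_bnd: "f \<in> Bset S \<Longrightarrow> \<exists>C\<ge>0. \<forall>z\<in>S. \<bar>f z\<bar> \<le> C"
proof -
  assume "f \<in> Bset S"
  then obtain c where c: "\<forall>z\<in>S. \<bar>f z\<bar> \<le> c" unfolding Bset_def by blast
  hence "\<forall>z\<in>S. \<bar>f z\<bar> \<le> \<bar>c\<bar>" by (auto intro: order_trans[OF _ abs_ge_self])
  thus ?thesis by (intro exI[of _ "\<bar>c\<bar>"]) auto
qed

lemma Nfun_X: "Nfun (alexandroff_topology X) = {f \<in> Bset X. normalize (alexandroff_topology X) f = f}"
  unfolding Nfun_def Bfun_def alex_top ..

lemma Nfun_form:
  assumes f: "f \<in> Nfun (alexandroff_topology X)"
  shows "f x = (if x \<in> X then Inf (f ` (Y \<inter> up X x)) else 0)"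
proof -
  have fB: "f \<in> Bset X" and fn: "normalize (alexandroff_topology X) f = f" using f Nfun_X by auto
  obtain C where C: "\<forall>z\<in>X. \<bar>f z\<bar> \<le> C" using bset_bnd[OF fB] by blast
  show ?thesis
  proof (cases "x \<in> X")
    case True
    then show ?thesis using norm_E[where h=f and C=C, OF True] C fn by auto
  next
    case False
    then show ?thesis using fB unfolding Bset_def by auto
  qed
qed

lemma restr_Y: "m \<in> Y \<Longrightarrow> restrict_to Y f m = f m" by (simp add: restrict_to_def)

lemma main_iso: "bal_iso_N_B (alexandroff_topology X) Y (restrict_to Y)"
proof -
  let ?T = "alexandroff_topology X"
  have inj: "inj_on (restrict_to Y) (Nfun ?T)"
  proof (rule inj_onI)
    fix f g assume f: "f \<in> Nfun ?T" and g: "g \<in> Nfun ?T" and e: "restrict_to Y f = restrict_to Y g"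
    have fg: "f m = g m" if "m \<in> Y" for m using fun_cong[OF e, of m] that by (simp add: restrict_to_def)
    show "f = g"
    proof
      fix x
      have "Inf (f ` (Y \<inter> up X x)) = Inf (g ` (Y \<inter> up X x))"
        by (rule arg_cong[where f=Inf], rule image_cong) (auto simp: fg)
      thus "f x = g x" using Nfun_form[OF f, of x] Nfun_form[OF g, of x] by simp
    qed
  qed
  have sub: "restrict_to Y ` Nfun ?T \<subseteq> Bset Y"
  proof
    fix u assume "u \<in> restrict_to Y ` Nfun ?T"
    then obtain f where f: "f \<in> Nfun ?T" and u: "u = restrict_to Y f" by blast
    have fB: "f \<in> Bset X" using f Nfun_X by auto
    obtain C where C: "\<forall>z\<in>X. \<bar>f z\<bar> \<le> C" using bset_bnd[OF fB] by blast
    show "u \<in> Bset Y" unfolding u Bset_def restrict_to_def using C YX by auto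
  qed
  have sup: "Bset Y \<subseteq> restrict_to Y ` Nfun ?T"
  proof
    fix g assume gB: "g \<in> Bset Y"
    obtain C where C: "C \<ge> 0" "\<forall>z\<in>Y. \<bar>g z\<bar> \<le> C" using bset_bnd[OF gB] by blast
    define f where "f = (\<lambda>x. if x \<in> X then Inf (g ` (Y \<inter> up X x)) else 0)"
    have ne: "Y \<inter> up X x \<noteq> {}" if "x \<in> X" for x using ex[OF that] YX by (auto simp: up_def)
    have bb: "bdd_below (g ` (Y \<inter> up X x))" for x
      using C by (intro bdd_belowI2[where m="-C"]) (force simp: abs_le_iff)
    have fb: "\<bar>f x\<bar> \<le> C" if x: "x \<in> X" for x
    proof -
      obtain m where m: "m \<in> Y \<inter> up X x" using ne[OF x] by blast
      have "Inf (g ` (Y \<inter> up X x)) \<le> g m" using m bb by (intro cInf_lower) auto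
      moreover have "-C \<le> Inf (g ` (Y \<inter> up X x))"
        using ne[OF x] C by (intro cInf_greatest) (auto simp: abs_le_iff)
      moreover have "g m \<le> C" using m C by (auto simp: abs_le_iff)
      ultimately show ?thesis using x unfolding f_def by auto
    qed
    have fm: "f m = g m" if m: "m \<in> Y" for m
    proof -
      have "Y \<inter> up X m = {m}" using upY[OF m] m by blast
      thus ?thesis using m YX unfolding f_def by auto
    qed
    have fB: "f \<in> Bset X" unfolding Bset_def using fb by (auto simp: f_def)
    have fn: "normalize ?T f = f"
    proof
      fix x show "normalize ?T f x = f x"
      proof (cases "x \<in> X")
        case True
        have "normalize ?T f x = Inf (f ` (Y \<inter> up X x))" using norm_E[where h=f and C=C, OF True] fb by blast
        also have "\<dots> = Inf (g ` (Y \<inter> up X x))"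
          by (rule arg_cong[where f=Inf], rule image_cong) (auto simp: fm)
        finally show ?thesis using True by (simp add: f_def)
      next
        case False thus ?thesis by (simp add: normalize_def alex_top f_def)
      qed
    qed
    have "f \<in> Nfun ?T" using fB fn Nfun_X by auto
    moreover have "restrict_to Y f = g"
    proof
      fix y show "restrict_to Y f y = g y"
        using gB fm unfolding restrict_to_def Bset_def by auto
    qed
    ultimately show "g \<in> restrict_to Y ` Nfun ?T" by blast
  qed
  have bnd2: "\<exists>C. \<forall>z\<in>X. \<bar>f z\<bar> \<le> C \<and> \<bar>g z\<bar> \<le> C \<and> C \<ge> 0" if "f \<in> Nfun ?T" "g \<in> Nfun ?T" for f g
  proof -
    have "f \<in> Bset X" "g \<in> Bset X" using that unfolding Nfun_X by auto
    then obtain C1 C2 where C1: "C1 \<ge> 0" "\<forall>z\<in>X. \<bar>f z\<bar> \<le> C1"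
       and C2: "C2 \<ge> 0" "\<forall>z\<in>X. \<bar>g z\<bar> \<le> C2" using bset_bnd by metis
    show ?thesis using C1 C2 by (intro exI[of _ "C1 + C2"]) auto
  qed
  have ops: "restrict_to Y (normalize ?T (\<lambda>x. f x + g x)) = (\<lambda>y. restrict_to Y f y + restrict_to Y g y) \<and>
        restrict_to Y (normalize ?T (\<lambda>x. f x * g x)) = (\<lambda>y. restrict_to Y f y * restrict_to Y g y) \<and>
        restrict_to Y (normalize ?T (\<lambda>x. max (f x) (g x))) = (\<lambda>y. max (restrict_to Y f y) (restrict_to Y g y)) \<and>
        restrict_to Y (normalize ?T (\<lambda>x. min (f x) (g x))) = (\<lambda>y. min (restrict_to Y f y) (restrict_to Y g y))"
    if f: "f \<in> Nfun ?T" and g: "g \<in> Nfun ?T" for f g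
  proof -
    obtain C where C: "\<forall>z\<in>X. \<bar>f z\<bar> \<le> C \<and> \<bar>g z\<bar> \<le> C \<and> C \<ge> 0" using bnd2[OF f g] by blast
    have b1: "\<bar>f z + g z\<bar> \<le> C + C" if "z \<in> X" for z using C that by (auto simp: abs_le_iff)
    have b2: "\<bar>f z * g z\<bar> \<le> C * C" if "z \<in> X" for z
      using C that by (auto simp: abs_mult intro!: mult_mono)
    have b3: "\<bar>max (f z) (g z)\<bar> \<le> C" if "z \<in> X" for z using C that by (auto simp: abs_le_iff)
    have b4: "\<bar>min (f z) (g z)\<bar> \<le> C" if "z \<in> X" for z using C that by (auto simp: abs_le_iff)
    show ?thesis
      using norm_Y[where h="\<lambda>x. f x + g x" and C="C+C", OF _ b1]
        norm_Y[where h="\<lambda>x. f x * g x" and C="C*C", OF _ b2]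
        norm_Y[where h="\<lambda>x. max (f x) (g x)" and C="C", OF _ b3]
        norm_Y[where h="\<lambda>x. min (f x) (g x)" and C="C", OF _ b4]
      by (auto simp: restrict_to_def fun_eq_iff)
  qed
  have sc: "restrict_to Y (normalize ?T (\<lambda>x. r * f x)) = (\<lambda>y. r * restrict_to Y f y)"
    if f: "f \<in> Nfun ?T" for f r
  proof -
    have "f \<in> Bset X" using f unfolding Nfun_X by auto
    then obtain C where C: "C \<ge> 0" "\<forall>z\<in>X. \<bar>f z\<bar> \<le> C" using bset_bnd by metis
    have b: "\<bar>r * f z\<bar> \<le> \<bar>r\<bar> * C" if "z \<in> X" for z
      using C that by (auto simp: abs_mult intro!: mult_left_mono)
    show ?thesis using norm_Y[where h="\<lambda>x. r * f x" and C="\<bar>r\<bar> * C", OF _ b]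
      by (auto simp: restrict_to_def fun_eq_iff)
  qed
  have unit: "restrict_to Y (\<lambda>x. if x \<in> topspace ?T then 1 else 0) = (\<lambda>y. if y \<in> Y then 1 else 0)"
    using YX by (auto simp: restrict_to_def alex_top fun_eq_iff)
  have im: "restrict_to Y ` Nfun ?T = Bset Y" using sub sup by (rule antisym)
  show ?thesis unfolding bal_iso_N_B_def bij_betw_def
    using inj im ops sc unit by simp
qed

end


lemma li_zero: "l_ideal I \<Longrightarrow> 0 \<in> I" unfolding l_ideal_def by simp
lemma li_add: "l_ideal I \<Longrightarrow> x \<in> I \<Longrightarrow> y \<in> I \<Longrightarrow> x + y \<in> I" unfolding l_ideal_def by simp
lemma li_mult: "l_ideal I \<Longrightarrow> y \<in> I \<Longrightarrow> a * y \<in> I" unfolding l_ideal_def by simp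
lemma li_solid: "l_ideal I \<Longrightarrow> y \<in> I \<Longrightarrow> labs x \<le> labs y \<Longrightarrow> x \<in> I" unfolding l_ideal_def by blast

lemma ideal_not_one: "l_ideal (I::'a::{comm_ring_1, ordered_ab_group_add, lattice} set) \<Longrightarrow> I \<noteq> UNIV \<Longrightarrow> (1::'a) \<notin> I"
  using li_mult[of I 1] by (metis UNIV_eq_I mult.right_neutral)

lemma exists_max:
  fixes I :: "'a::{comm_ring_1, ordered_ab_group_add, lattice} set"
  assumes I: "l_ideal I" "I \<noteq> UNIV"
  shows "\<exists>M. maximal_l_ideal M \<and> I \<subseteq> M"
proof -
  let ?F = "{J. l_ideal J \<and> (1::'a) \<notin> J \<and> I \<subseteq> J}"
  have "\<exists>M\<in>?F. \<forall>X\<in>?F. M \<subseteq> X \<longrightarrow> X = M"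
  proof (rule subset_Zorn_nonempty)
    have "I \<in> ?F" using I ideal_not_one by simp
    thus "?F \<noteq> {}" by blast
  next
    fix C assume Cne: "C \<noteq> {}" and ch: "subset.chain ?F C"
    have CF: "C \<subseteq> ?F" and cmp: "\<And>U V. U \<in> C \<Longrightarrow> V \<in> C \<Longrightarrow> U \<subseteq> V \<or> V \<subseteq> U"
      using ch unfolding subset.chain_def by auto
    have lC: "\<And>U. U \<in> C \<Longrightarrow> l_ideal U" and oC: "\<And>U. U \<in> C \<Longrightarrow> 1 \<notin> U"
      and iC: "\<And>U. U \<in> C \<Longrightarrow> I \<subseteq> U" using CF by auto
    obtain U0 where U0: "U0 \<in> C" using Cne by auto
    have "l_ideal (\<Union>C)" unfolding l_ideal_def
    proof (intro conjI ballI allI impI)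
      show "0 \<in> \<Union>C" using li_zero[OF lC[OF U0]] U0 by auto
    next
      fix x y assume x: "x \<in> \<Union>C" and y: "y \<in> \<Union>C"
      from x obtain U where U: "U \<in> C" "x \<in> U" by auto
      from y obtain V where V: "V \<in> C" "y \<in> V" by auto
      show "x + y \<in> \<Union>C"
      proof (cases "U \<subseteq> V")
        case True
        have "x + y \<in> V" by (rule li_add[OF lC[OF V(1)]]) (use True U V in auto)
        thus ?thesis using V by auto
      next
        case False hence "V \<subseteq> U" using cmp U V by auto
        hence "x + y \<in> U" by (intro li_add[OF lC[OF U(1)]]) (use U V in auto)
        thus ?thesis using U by auto
      qed
    next
      fix a y assume "y \<in> \<Union>C"
      then obtain U where U: "U \<in> C" "y \<in> U" by auto
      have "a * y \<in> U" by (rule li_mult[OF lC[OF U(1)] U(2)])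
      thus "a * y \<in> \<Union>C" using U by auto
    next
      fix x y assume h: "y \<in> \<Union>C \<and> labs x \<le> labs y"
      then obtain U where U: "U \<in> C" "y \<in> U" by auto
      have "x \<in> U" by (rule li_solid[OF lC[OF U(1)] U(2)]) (use h in auto)
      thus "x \<in> \<Union>C" using U by auto
    qed
    moreover have "1 \<notin> \<Union>C" using oC by auto
    moreover have "I \<subseteq> \<Union>C" using iC U0 by auto
    ultimately show "\<Union>C \<in> ?F" by simp
  qed
  then obtain M where M: "M \<in> ?F" and mx: "\<And>X. X \<in> ?F \<Longrightarrow> M \<subseteq> X \<Longrightarrow> X = M" by auto
  have "maximal_l_ideal M" unfolding maximal_l_ideal_def
  proof (intro conjI allI impI)
    show "l_ideal M" using M by simp
    show "M \<noteq> UNIV" using M by auto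
    fix J assume J: "l_ideal J \<and> J \<noteq> UNIV \<and> M \<subseteq> J"
    hence "J \<in> ?F" using M ideal_not_one[of J] by auto
    thus "J = M" using mx J by auto
  qed
  thus ?thesis using M by auto
qed



context
  fixes A :: "'a::{comm_ring_1, real_algebra_1, ordered_ab_group_add, lattice} itself"
  assumes bal: "bal_algebra A"
begin

lemma pos_mult: "0 \<le> (a::'a) \<Longrightarrow> 0 \<le> b \<Longrightarrow> 0 \<le> a * b"
  using bal unfolding bal_algebra_def by blast

lemma pos_scale: "0 \<le> (r::real) \<Longrightarrow> 0 \<le> (a::'a) \<Longrightarrow> 0 \<le> r *\<^sub>R a"
  using bal unfolding bal_algebra_def by blast

lemma bounded: "\<exists>n::nat. n \<ge> 1 \<and> (a::'a) \<le> of_nat n"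
  using bal unfolding bal_algebra_def by blast

lemma scale_mono: "0 \<le> (r::real) \<Longrightarrow> (x::'a) \<le> y \<Longrightarrow> r *\<^sub>R x \<le> r *\<^sub>R y"
proof -
  assume r: "0 \<le> r" and xy: "x \<le> y"
  have "0 \<le> r *\<^sub>R (y - x)" using pos_scale[OF r] xy by simp
  thus ?thesis by (simp add: scaleR_diff_right)
qed

lemma mult_mono': "0 \<le> (p::'a) \<Longrightarrow> x \<le> y \<Longrightarrow> p * x \<le> p * y"
proof -
  assume p: "0 \<le> p" and xy: "x \<le> y"
  have "0 \<le> p * (y - x)" using pos_mult[OF p] xy by simp
  thus ?thesis by (simp add: right_diff_distrib)
qed

lemma labs_ge1: "(x::'a) \<le> labs x" unfolding labs_def by simp
lemma labs_ge2: "- (x::'a) \<le> labs x" unfolding labs_def by simp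

lemma labs_nonneg: "0 \<le> labs (x::'a)"
proof -
  have "x + - x \<le> labs x + labs x" by (rule add_mono[OF labs_ge1 labs_ge2])
  hence "0 \<le> 2 *\<^sub>R labs x" by (simp add: scaleR_2)
  hence "0 \<le> (1/2) *\<^sub>R (2 *\<^sub>R labs x)" by (rule pos_scale[rotated]) simp
  thus ?thesis by simp
qed

lemma labs_of_nonneg: "0 \<le> (x::'a) \<Longrightarrow> labs x = x"
  unfolding labs_def by (rule sup_absorb1) (meson neg_le_0_iff_le order_trans)

lemma of_nat_scale: "(of_nat n :: 'a) = real n *\<^sub>R 1"
  by (simp add: scaleR_conv_of_real)

lemma one_nonneg: "0 \<le> (1::'a)"
proof -
  obtain n::nat where n: "n \<ge> 1" "labs (1::'a) \<le> of_nat n" using bounded by blast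
  have "0 \<le> real n *\<^sub>R (1::'a)" using order_trans[OF labs_nonneg n(2)] of_nat_scale by simp
  hence "0 \<le> (1 / real n) *\<^sub>R (real n *\<^sub>R (1::'a))" by (rule pos_scale[rotated]) simp
  thus ?thesis using n(1) by simp
qed

lemma abs_bound: "\<exists>N\<ge>0. labs (a::'a) \<le> N *\<^sub>R 1"
proof -
  obtain n::nat where n: "labs a \<le> of_nat n" using bounded by blast
  thus ?thesis using of_nat_scale by (intro exI[of _ "real n"]) auto
qed

lemma scale_sup: "0 < (r::real) \<Longrightarrow> r *\<^sub>R sup (x::'a) y = sup (r *\<^sub>R x) (r *\<^sub>R y)"
proof (rule antisym)
  assume r: "0 < r"
  let ?s = "sup (r *\<^sub>R x) (r *\<^sub>R y)"
  have "x \<le> (1/r) *\<^sub>R ?s"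
    using scale_mono[of "1/r" "r *\<^sub>R x" ?s] r by simp
  moreover have "y \<le> (1/r) *\<^sub>R ?s"
    using scale_mono[of "1/r" "r *\<^sub>R y" ?s] r by simp
  ultimately have "sup x y \<le> (1/r) *\<^sub>R ?s" by simp
  from scale_mono[OF _ this, of r] r show "r *\<^sub>R sup x y \<le> ?s" by simp
next
  assume r: "0 < r"
  show "sup (r *\<^sub>R x) (r *\<^sub>R y) \<le> r *\<^sub>R sup x y" using scale_mono[of r x "sup x y"] scale_mono[of r y "sup x y"] r by simp
qed

lemma mult_abs_bound:
  assumes N: "0 \<le> N" and a: "labs (a::'a) \<le> N *\<^sub>R 1"
  shows "labs (a * x) \<le> (3 * N) *\<^sub>R labs x"
proof -
  define p where "p = a + N *\<^sub>R 1"
  define t where "t = labs x"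
  have t0: "0 \<le> t" unfolding t_def by (rule labs_nonneg)
  have "- a \<le> N *\<^sub>R 1" using order_trans[OF labs_ge2 a] .
  hence p0: "0 \<le> p" using add_right_mono[of "- a" "N *\<^sub>R 1" a] unfolding p_def by (simp add: add.commute)
  have "a + N *\<^sub>R 1 \<le> N *\<^sub>R 1 + N *\<^sub>R 1" by (rule add_right_mono[OF order_trans[OF labs_ge1 a]])
  also have "\<dots> = (2 * N) *\<^sub>R (1::'a)" by (simp only: scaleR_left_distrib[symmetric] mult_2)
  finally have p2: "p \<le> (2 * N) *\<^sub>R 1" unfolding p_def .
  have pt: "p * t \<le> (2 * N) *\<^sub>R t"
  proof -
    have "0 \<le> ((2 * N) *\<^sub>R 1 - p) * t" using p2 t0 by (intro pos_mult) auto
    thus ?thesis by (simp add: left_diff_distrib)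
  qed
  have px1: "p * x \<le> (2 * N) *\<^sub>R t" using mult_mono'[OF p0 labs_ge1[of x]] pt unfolding t_def by simp
  have px2: "- (p * x) \<le> (2 * N) *\<^sub>R t" using mult_mono'[OF p0 labs_ge2[of x]] pt unfolding t_def by simp
  have nx1: "N *\<^sub>R x \<le> N *\<^sub>R t" using scale_mono[OF N labs_ge1[of x]] unfolding t_def .
  have nx2: "- (N *\<^sub>R x) \<le> N *\<^sub>R t" using scale_mono[OF N labs_ge2[of x]] unfolding t_def by simp
  have ax: "a * x = p * x - N *\<^sub>R x" unfolding p_def by (simp add: algebra_simps)
  have e: "(3 * N) *\<^sub>R t = (2 * N) *\<^sub>R t + N *\<^sub>R t" by (simp add: scaleR_left_distrib[symmetric])
  have "a * x \<le> (3 * N) *\<^sub>R t" unfolding ax e diff_conv_add_uminus by (rule add_mono[OF px1 nx2])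
  moreover have "- (a * x) \<le> (3 * N) *\<^sub>R t"
  proof -
    have "- (a * x) = - (p * x) + N *\<^sub>R x" unfolding ax by simp
    thus ?thesis unfolding e using add_mono[OF px2 nx1] by simp
  qed
  ultimately show ?thesis unfolding labs_def t_def by simp
qed

lemma labs_add: "labs ((x::'a) + y) \<le> labs x + labs y"
proof -
  have "x + y \<le> labs x + labs y" by (rule add_mono[OF labs_ge1 labs_ge1])
  moreover have "- (x + y) \<le> labs x + labs y" using add_mono[OF labs_ge2[of x] labs_ge2[of y]] by simp
  ultimately show ?thesis unfolding labs_def[of "x+y"] by simp
qed

lemma labs_labs: "labs (labs (x::'a)) = labs x" by (rule labs_of_nonneg[OF labs_nonneg])

lemma ideal_scale: "l_ideal I \<Longrightarrow> (m::'a) \<in> I \<Longrightarrow> r *\<^sub>R m \<in> I"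
  unfolding l_ideal_def scaleR_conv_of_real by blast

lemma ideal_add: "l_ideal I \<Longrightarrow> (m::'a) \<in> I \<Longrightarrow> n \<in> I \<Longrightarrow> m + n \<in> I"
  unfolding l_ideal_def by blast

lemma ideal_solid: "l_ideal I \<Longrightarrow> (m::'a) \<in> I \<Longrightarrow> labs x \<le> labs m \<Longrightarrow> x \<in> I"
  unfolding l_ideal_def by blast

lemma ideal_one: "l_ideal I \<Longrightarrow> (1::'a) \<in> I \<Longrightarrow> I = UNIV"
  unfolding l_ideal_def by (metis UNIV_eq_I mult.right_neutral)

lemma max_arch:
  assumes M: "maximal_l_ideal (M::'a set)"
  shows "archimedean_l_ideal M"
proof -
  have lM: "l_ideal M" and pM: "M \<noteq> UNIV"
    and mx: "\<And>J. l_ideal J \<Longrightarrow> J \<noteq> UNIV \<Longrightarrow> M \<subseteq> J \<Longrightarrow> J = M"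
    using M unfolding maximal_l_ideal_def by blast+
  have "quot_le M a 0" if H: "\<forall>n::nat. n \<ge> 1 \<longrightarrow> quot_le M (of_nat n * a) b" for a b
  proof (rule ccontr)
    define c where "c = sup a 0"
    assume "\<not> quot_le M a 0"
    hence cM: "c \<notin> M" unfolding quot_le_def c_def by simp
    have c0: "0 \<le> c" unfolding c_def by simp
    define J where "J = {x. \<exists>m\<in>M. \<exists>k::real. 0 \<le> k \<and> labs x \<le> m + k *\<^sub>R c}"
    have lJ: "l_ideal J" unfolding l_ideal_def
    proof (intro conjI ballI allI impI)
      show "0 \<in> J" unfolding J_def using lM unfolding l_ideal_def
        by (intro CollectI bexI[of _ 0] exI[of _ 0]) (auto simp: labs_def)
    next
      fix x y assume "x \<in> J" "y \<in> J"
      then obtain m1 k1 m2 k2 where h: "m1 \<in> M" "0 \<le> k1" "labs x \<le> m1 + k1 *\<^sub>R c"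
        "m2 \<in> M" "0 \<le> k2" "labs y \<le> m2 + k2 *\<^sub>R c" unfolding J_def by blast
      have "labs (x + y) \<le> (m1 + m2) + (k1 + k2) *\<^sub>R c"
        using order_trans[OF labs_add add_mono[OF h(3) h(6)]] by (simp add: algebra_simps scaleR_left_distrib)
      thus "x + y \<in> J" unfolding J_def using h ideal_add[OF lM h(1) h(4)]
        by (intro CollectI bexI[of _ "m1+m2"] exI[of _ "k1+k2"]) auto
    next
      fix a' :: 'a and y assume "y \<in> J"
      then obtain m k where h: "m \<in> M" "0 \<le> k" "labs y \<le> m + k *\<^sub>R c" unfolding J_def by blast
      obtain N where N: "0 \<le> N" "labs a' \<le> N *\<^sub>R 1" using abs_bound by blast
      have "labs (a' * y) \<le> (3 * N) *\<^sub>R labs y" by (rule mult_abs_bound[OF N])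
      also have "\<dots> \<le> (3 * N) *\<^sub>R (m + k *\<^sub>R c)" by (rule scale_mono) (use N h in auto)
      also have "\<dots> = (3 * N) *\<^sub>R m + (3 * N * k) *\<^sub>R c" by (simp add: scaleR_add_right)
      finally show "a' * y \<in> J" unfolding J_def using h N ideal_scale[OF lM h(1), of "3*N"]
        by (intro CollectI bexI[of _ "(3 * N) *\<^sub>R m"] exI[of _ "3*N*k"]) auto
    next
      fix x y assume "y \<in> J \<and> labs x \<le> labs y"
      then obtain m k where h: "m \<in> M" "0 \<le> k" "labs y \<le> m + k *\<^sub>R c" "labs x \<le> labs y" unfolding J_def by blast
      have "labs x \<le> m + k *\<^sub>R c" using h(3,4) by (rule order_trans[rotated])
      thus "x \<in> J" unfolding J_def using h(1,2) by blast
    qed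
    have MJ: "M \<subseteq> J"
    proof
      fix m assume m: "m \<in> M"
      have "labs m \<in> M" using ideal_solid[OF lM m] labs_labs by simp
      thus "m \<in> J" unfolding J_def by (intro CollectI bexI[of _ "labs m"] exI[of _ 0]) auto
    qed
    have cJ: "c \<in> J" unfolding J_def using lM labs_of_nonneg[OF c0]
      by (intro CollectI bexI[of _ 0] exI[of _ 1]) (auto simp: l_ideal_def)
    have "J = UNIV"
    proof (rule ccontr)
      assume "J \<noteq> UNIV"
      hence "J = M" by (rule mx[OF lJ _ MJ])
      thus False using cJ cM by simp
    qed
    hence "1 \<in> J" by simp
    then obtain m1 k1 where h1: "m1 \<in> M" "0 \<le> k1" "labs (1::'a) \<le> m1 + k1 *\<^sub>R c" unfolding J_def by blast
    have one: "(1::'a) \<le> m1 + k1 *\<^sub>R c" using order_trans[OF labs_ge1 h1(3)] .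
    obtain B where B: "0 \<le> B" "labs b \<le> B *\<^sub>R 1" using abs_bound by blast
    have bB: "b \<le> B *\<^sub>R 1" using order_trans[OF labs_ge1 B(2)] .
    obtain n0::nat where n0: "B * k1 < real n0" using reals_Archimedean2 by blast
    define n where "n = Suc n0"
    have n1: "n \<ge> 1" and nB: "B * k1 < real n" using n0 unfolding n_def by auto
    define mn where "mn = sup (of_nat n * a - b) 0"
    have mnM: "mn \<in> M" using H n1 unfolding quot_le_def mn_def by blast
    have mn0: "0 \<le> mn" unfolding mn_def by simp
    have na: "real n *\<^sub>R a \<le> b + mn"
    proof -
      have "of_nat n * a - b \<le> mn" unfolding mn_def by simp
      hence "of_nat n * a \<le> b + mn" by (simp add: algebra_simps)
      thus ?thesis by (simp add: scaleR_conv_of_real)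
    qed
    have nc: "real n *\<^sub>R c = sup (real n *\<^sub>R a) 0"
      unfolding c_def using scale_sup[of "real n" a 0] n1 by simp
    have B1: "0 \<le> B *\<^sub>R (1::'a)" by (rule pos_scale[OF B(1) one_nonneg])
    have "real n *\<^sub>R c \<le> B *\<^sub>R 1 + mn" unfolding nc
    proof (rule sup_least)
      show "real n *\<^sub>R a \<le> B *\<^sub>R 1 + mn" using na bB by (meson add_right_mono order_trans)
      show "0 \<le> B *\<^sub>R 1 + mn" using B1 mn0 by simp
    qed
    also have "B *\<^sub>R 1 \<le> B *\<^sub>R (m1 + k1 *\<^sub>R c)" by (rule scale_mono[OF B(1) one])
    hence "B *\<^sub>R 1 + mn \<le> B *\<^sub>R m1 + (B * k1) *\<^sub>R c + mn" by (simp add: scaleR_add_right)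
    finally have "real n *\<^sub>R c \<le> B *\<^sub>R m1 + (B * k1) *\<^sub>R c + mn" .
    hence "real n *\<^sub>R c - (B * k1) *\<^sub>R c \<le> B *\<^sub>R m1 + mn" by (simp add: algebra_simps)
    hence dle: "(real n - B * k1) *\<^sub>R c \<le> B *\<^sub>R m1 + mn" by (simp add: scaleR_diff_left)
    define d where "d = real n - B * k1"
    have d0: "0 < d" using nB unfolding d_def by simp
    have "(1/d) *\<^sub>R (d *\<^sub>R c) \<le> (1/d) *\<^sub>R (B *\<^sub>R m1 + mn)"
      using scale_mono[OF _ dle[folded d_def], of "1/d"] d0 by simp
    hence cle: "c \<le> (1/d) *\<^sub>R (B *\<^sub>R m1 + mn)" using d0 by simp
    have m''M: "(1/d) *\<^sub>R (B *\<^sub>R m1 + mn) \<in> M"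
      by (intro ideal_scale[OF lM] ideal_add[OF lM] mnM ideal_scale[OF lM h1(1)])
    have "labs c \<le> labs ((1/d) *\<^sub>R (B *\<^sub>R m1 + mn))"
      using labs_of_nonneg[OF c0] order_trans[OF cle labs_ge1] by simp
    hence "c \<in> M" by (rule ideal_solid[OF lM m''M])
    thus False using cM by simp
  qed
  thus ?thesis unfolding archimedean_l_ideal_def using lM by blast
qed

lemma max_in_X: "maximal_l_ideal (M::'a set) \<Longrightarrow> M \<in> arch_spec A"
  unfolding arch_spec_def using max_arch by (auto simp: maximal_l_ideal_def)

end


theorem mainTheorem13:
  fixes A :: "'a::{comm_ring_1, real_algebra_1, ordered_ab_group_add, lattice} itself"
  assumes "bal_algebra A"
  shows "bal_iso_N_B (alexandroff_topology (arch_spec A)) (max_spec A) (restrict_to (max_spec A))"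
proof -
  interpret YX "arch_spec A" "max_spec A"
  proof
    show "max_spec A \<subseteq> arch_spec A" using max_in_X[OF assms] unfolding max_spec_def by blast
  next
    fix x assume "x \<in> arch_spec A"
    hence "l_ideal x" "x \<noteq> UNIV" unfolding arch_spec_def by auto
    then obtain M where "maximal_l_ideal M" "x \<subseteq> M" using exists_max by blast
    thus "\<exists>m\<in>max_spec A. x \<subseteq> m" unfolding max_spec_def by blast
  next
    fix m z assume "m \<in> max_spec A" "z \<in> arch_spec A" "m \<subseteq> z"
    thus "z = m" unfolding max_spec_def arch_spec_def maximal_l_ideal_def by blast
  qed
  show ?thesis by (rule main_iso)
qed

end
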